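(* Let $a,b\in\mathbb{C}$ and let $u(\tau)$ be a solution of $$u''=\frac{(u')^2}{u}-\frac{u'}{\tau}+\frac1\tau\bigl(-8u^2+2ab\bigr)+\frac{b^2}{u}.$$ If $\operatorname{Re}u(\tau)>0$ for all $\tau>0$, then $u$ has no poles for $\tau>0$. *)

theory Defs
  imports "HOL-Complex_Analysis.Complex_Analysis"
begin

end

theory Submission
  imports Defs
begin

lemma alg1:
  fixes G0 G1 G2 q t z M a b :: complex
  assumes "G0\<noteq>0" "q\<noteq>0" "t\<noteq>0" "z\<noteq>0"
  and "G2*q + 2*G1*(-M*q/t) + G0*(M*(M+1)*q/t^2) = (G1*q + G0*(-M*q/t))^2/(G0*q) - (G1*q + G0*(-M*q/t))/z + (-8*(G0*q)^2 + 2*a*b)/z + b^2/(G0*q)"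
  shows "z*(t^2*(G0*G2 - G1^2) + M*G0^2) = -(G1*t - M*G0)*G0*t - 8*G0^3*q*t^2 + 2*a*b*G0*t^2/q + b^2*z*t^2/q^2"
proof -
  have e: "((G2*q + 2*G1*(-M*q/t) + G0*(M*(M+1)*q/t^2)) - ((G1*q + G0*(-M*q/t))^2/(G0*q) - (G1*q + G0*(-M*q/t))/z + (-8*(G0*q)^2 + 2*a*b)/z + b^2/(G0*q))) * (G0*t^2*z/q)
     = z*(t^2*(G0*G2 - G1^2) + M*G0^2) - (-(G1*t - M*G0)*G0*t - 8*G0^3*q*t^2 + 2*a*b*G0*t^2/q + b^2*z*t^2/q^2)"
    using assms(1-4) by (simp add: divide_simps power2_eq_square power3_eq_cube) (simp add: algebra_simps)
  show ?thesis using e assms(5) by simp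
qed

lemma qderiv:
  fixes c w :: complex assumes "w \<noteq> c" "m \<ge> 1"
  shows "((\<lambda>w. 1/(w-c)^m) has_field_derivative (- of_nat m * (1/(w-c)^m) / (w-c))) (at w)"
proof -
  have "((\<lambda>w. 1/(w-c)^m) has_field_derivative (- (of_nat m * (w-c)^(m-1) * 1) / ((w-c)^m * (w-c)^m))) (at w)"
    using assms by (auto intro!: derivative_eq_intros)
  moreover have "- (of_nat m * (w-c)^(m-1) * 1) / ((w-c)^m * (w-c)^m) = - of_nat m * (1/(w-c)^m) / (w-c)"
  proof -
    obtain k where m: "m = Suc k" using assms(2) by (cases m) auto
    have t: "w - c \<noteq> 0" using assms by simp
    show ?thesis unfolding m using t
      by (simp add: divide_simps del: of_nat_Suc)
  qed
  ultimately show ?thesis by simp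
qed

lemma alg_U2:
  fixes G0 G1 G2 q t M :: complex
  assumes "t \<noteq> 0"
  shows "(G2*q + G1*(- M*q/t)) + (G1*(- M*q/t) + G0*((((- M)*(- M*q/t))*t - (- M*q)*1)/(t*t)))
    = G2*q + 2*G1*(- M*q/t) + G0*(M*(M+1)*q/t^2)"
  using assms by (simp add: field_simps power2_eq_square)

lemma alg_gc:
  fixes c G :: complex assumes "G \<noteq> 0" "c * (2 * G^2) = - 8 * G^3" shows "G = - c / 4"
proof -
  have "G^2 * (2 * c + 8 * G) = c * (2 * G^2) - (- 8 * G^3)" by algebra
  also have "\<dots> = 0" using assms(2) by (simp only: diff_self)
  finally have "2 * c + 8 * G = 0" using assms(1) by simp
  then show ?thesis by algebra
qed

lemma lim_eq:
  fixes F H :: "complex \<Rightarrow> complex"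
  assumes "isCont F c" "isCont H c" "r > 0" "\<And>w. w\<in>ball c r - {c} \<Longrightarrow> F w = H w"
  shows "F c = H c"
proof -
  have ev: "eventually (\<lambda>w. F w = H w) (at c)"
    unfolding eventually_at using assms(3,4) by (auto intro!: exI[of _ r] simp: dist_commute)
  have "(F \<longlongrightarrow> F c) (at c)" using assms(1) isCont_def by blast
  moreover have "(F \<longlongrightarrow> H c) (at c)"
    using assms(2) isCont_def tendsto_cong[OF ev] by blast
  ultimately show ?thesis using tendsto_unique by (metis at_neq_bot)
qed

lemma alg_m1:
  fixes G0 G1 G2 t z M c :: complex
  assumes "t \<noteq> 0" "z*(t^2*K + M*G0^2) = -(G1*t - M*G0)*G0*t - 8*G0^3*(1/t^1)*t^2 + C*t^2/(1/t^1) + D*z*t^2/(1/t^1)^2"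
  shows "z*(t^2*K + M*G0^2) = -(G1*t - M*G0)*G0*t - 8*G0^3*t + C*t^3 + D*z*t^4"
  using assms by (simp add: field_simps power2_eq_square power3_eq_cube power4_eq_xxxx)

lemma alg_m2:
  fixes G0 G1 G2 t z M c p :: complex
  assumes "t \<noteq> 0" "p \<noteq> 0" "z*(t^2*K + M*G0^2) = -(G1*t - M*G0)*G0*t - 8*G0^3*(1/(p*t^2))*t^2 + C*t^2/(1/(p*t^2)) + D*z*t^2/(1/(p*t^2))^2"
  shows "z*p*(t^2*K + M*G0^2) = -(G1*t - M*G0)*G0*p*t - 8*G0^3 + C*p^2*t^4 + D*z*p^3*t^6"
proof -
  have "z*p*(t^2*K + M*G0^2) = p * (-(G1*t - M*G0)*G0*t - 8*G0^3*(1/(p*t^2))*t^2 + C*t^2/(1/(p*t^2)) + D*z*t^2/(1/(p*t^2))^2)"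
    using assms(3) by simp
  also have "\<dots> = -(G1*t - M*G0)*G0*p*t - 8*G0^3 + C*p^2*t^4 + D*z*p^3*t^6"
    using assms(1,2) by (simp add: field_simps eval_nat_numeral)
  finally show ?thesis .
qed

theorem lemma3:
  fixes u :: "complex \<Rightarrow> complex" and a b :: complex
    and S P :: "complex set"
  assumes S_open: "open S"
    and S_pos: "{z. Im z = 0 \<and> Re z > 0} \<subseteq> S"
    and S_zero: "0 \<notin> S"
    and P_sub: "P \<subseteq> S"
    and P_discrete: "\<And>z. z \<in> S \<Longrightarrow> \<not> z islimpt P"
    and holo: "u holomorphic_on (S - P)"
    and poles: "\<And>p. p \<in> P \<Longrightarrow> is_pole u p"
    and ode: "\<And>z. z \<in> S - P \<Longrightarrow> u z \<noteq> 0 \<Longrightarrow>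
       deriv (deriv u) z = (deriv u z)\<^sup>2 / u z - deriv u z / z
         + (- 8 * (u z)\<^sup>2 + 2 * a * b) / z + b\<^sup>2 / u z"
    and re_pos: "\<And>t::real. t > 0 \<Longrightarrow> \<not> is_pole u (complex_of_real t)
       \<Longrightarrow> Re (u (complex_of_real t)) > 0"
  shows "\<forall>t::real. t > 0 \<longrightarrow> \<not> is_pole u (complex_of_real t)"
proof (intro allI impI notI)
  fix t0 :: real
  assume t0: "t0 > 0" and pole: "is_pole u (complex_of_real t0)"
  define c where "c = complex_of_real t0"
  have cS: "c \<in> S" using S_pos t0 by (auto simp: c_def)
  have c0: "c \<noteq> 0" using t0 by (simp add: c_def)
  have "\<not> c islimpt P" using P_discrete cS by blast
  then obtain e where e: "e > 0" "\<And>x. x \<in> P \<Longrightarrow> x \<noteq> c \<Longrightarrow> dist x c \<ge> e"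
    unfolding islimpt_approachable by (auto simp: not_less)
  obtain e2 where e2: "e2 > 0" "ball c e2 \<subseteq> S" using S_open cS openE by blast
  define r0 where "r0 = min e e2"
  have r0: "r0 > 0" using e e2 by (simp add: r0_def)
  have sub0: "ball c r0 - {c} \<subseteq> S - P"
  proof
    fix x assume x: "x \<in> ball c r0 - {c}"
    then have "x \<in> S" using e2 by (auto simp: r0_def)
    moreover have "x \<notin> P"
    proof
      assume "x \<in> P"
      then have "dist x c \<ge> e" using e x by auto
      moreover have "dist x c < e" using x by (auto simp: r0_def dist_commute)
      ultimately show False by simp
    qed
    ultimately show "x \<in> S - P" by simp
  qed
  have hol0: "u holomorphic_on ball c r0 - {c}" using holomorphic_on_subset[OF holo sub0] .
  define n where "n = zorder u c"
  define g where "g = zor_poly u c"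
  have pole': "is_pole u c" using pole by (simp add: c_def)
  have Z: "n < 0 \<and> g c \<noteq> 0 \<and> (\<exists>r. r>0 \<and> cball c r \<subseteq> ball c r0 \<and> g holomorphic_on cball c r
    \<and> (\<forall>w\<in>cball c r - {c}. u w = g w / (w-c) ^ nat (- n) \<and> g w \<noteq> 0))"
    unfolding n_def g_def using zorder_exist_pole[OF hol0 open_ball _ pole'] r0 by simp
  then obtain r1 where r1: "r1 > 0" "cball c r1 \<subseteq> ball c r0" "g holomorphic_on cball c r1"
    "\<And>w. w \<in> cball c r1 - {c} \<Longrightarrow> u w = g w / (w-c) ^ nat (- n) \<and> g w \<noteq> 0"
    by blast
  have n0: "n < 0" and gc: "g c \<noteq> 0" using Z by auto
  define m where "m = nat (- n)"
  have m1: "m \<ge> 1" using n0 by (simp add: m_def)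
  define M where "M = (of_nat m :: complex)"
  define B where "B = ball c r1"
  define B' where "B' = ball c r1 - {c}"
  have oB: "open B" and oB': "open B'" by (auto simp: B_def B'_def)
  have "B' \<subseteq> ball c r0 - {c}" using r1(2) ball_subset_cball[of c r1] by (auto simp: B'_def)
  then have B'sub: "B' \<subseteq> S - P" using sub0 by blast
  have gB: "g holomorphic_on B" using r1(3) holomorphic_on_subset by (auto simp: B_def)
  have g1B: "deriv g holomorphic_on B" using gB oB by (rule holomorphic_deriv)
  have g2B: "deriv (deriv g) holomorphic_on B" using g1B oB by (rule holomorphic_deriv)
  define q where "q = (\<lambda>w::complex. 1 / (w - c) ^ m)"
  have uB: "\<And>w. w \<in> B' \<Longrightarrow> u w = g w * q w" using r1(4) by (auto simp: B'_def q_def m_def)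
  have gnz: "\<And>w. w \<in> B' \<Longrightarrow> g w \<noteq> 0" using r1(4) by (auto simp: B'_def)
  have dg: "\<And>w. w \<in> B \<Longrightarrow> (g has_field_derivative deriv g w) (at w)"
    using gB oB holomorphic_derivI by blast
  have ddg: "\<And>w. w \<in> B \<Longrightarrow> (deriv g has_field_derivative deriv (deriv g) w) (at w)"
    using g1B oB holomorphic_derivI by blast
  have dq: "\<And>w. w \<in> B' \<Longrightarrow> (q has_field_derivative (- M * q w / (w - c))) (at w)"
    unfolding q_def M_def using qderiv m1 by (auto simp: B'_def)
  define U1 where "U1 = (\<lambda>w. deriv g w * q w + g w * (- M * q w / (w - c)))"
  define U2 where "U2 = (\<lambda>w. deriv (deriv g) w * q w + 2 * deriv g w * (- M * q w / (w - c))
      + g w * (M * (M + 1) * q w / (w - c)^2))"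
  have d1: "\<And>w. w \<in> B' \<Longrightarrow> (u has_field_derivative U1 w) (at w)"
  proof -
    fix w assume w: "w \<in> B'"
    have "w \<in> B" using w by (auto simp: B_def B'_def)
    have "((\<lambda>w. g w * q w) has_field_derivative U1 w) (at w)"
      unfolding U1_def using DERIV_mult[OF dg[OF \<open>w \<in> B\<close>] dq[OF w]] by (simp add: algebra_simps)
    then show "(u has_field_derivative U1 w) (at w)"
      by (rule has_field_derivative_transform_within_open[OF _ oB' w]) (simp add: uB)
  qed
  have d2: "\<And>w. w \<in> B' \<Longrightarrow> (deriv u has_field_derivative U2 w) (at w)"
  proof -
    fix w assume w: "w \<in> B'"
    have wB: "w \<in> B" using w by (auto simp: B_def B'_def)
    have wc: "w - c \<noteq> 0" using w by (auto simp: B'_def)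
    have lin: "((\<lambda>v. v - c) has_field_derivative 1) (at w)" by (auto intro!: derivative_eq_intros)
    have A: "((\<lambda>v. deriv g v * q v) has_field_derivative (deriv (deriv g) w * q w + deriv g w * (- M * q w / (w - c)))) (at w)"
      using DERIV_mult[OF ddg[OF wB] dq[OF w]] by (simp add: algebra_simps)
    have Bq: "((\<lambda>v. - M * q v / (v - c)) has_field_derivative (((- M) * (- M * q w / (w - c))) * (w - c) - (- M * q w) * 1) / ((w - c) * (w - c))) (at w)"
      using DERIV_divide[OF DERIV_cmult[where c="- M", OF dq[OF w]] lin wc] by simp
    have C: "((\<lambda>v. g v * (- M * q v / (v - c))) has_field_derivative
        (deriv g w * (- M * q w / (w - c)) + g w * ((((- M) * (- M * q w / (w - c))) * (w - c) - (- M * q w) * 1) / ((w - c) * (w - c))))) (at w)"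
      using DERIV_mult[OF dg[OF wB] Bq] by (simp add: algebra_simps)
    have D: "(U1 has_field_derivative
       (deriv (deriv g) w * q w + deriv g w * (- M * q w / (w - c)))
        + (deriv g w * (- M * q w / (w - c)) + g w * ((((- M) * (- M * q w / (w - c))) * (w - c) - (- M * q w) * 1) / ((w - c) * (w - c))))) (at w)"
      unfolding U1_def using DERIV_add[OF A C] by simp
    moreover have "(deriv (deriv g) w * q w + deriv g w * (- M * q w / (w - c)))
        + (deriv g w * (- M * q w / (w - c)) + g w * ((((- M) * (- M * q w / (w - c))) * (w - c) - (- M * q w) * 1) / ((w - c) * (w - c)))) = U2 w"
      unfolding U2_def by (rule alg_U2[OF wc])
    ultimately have "(U1 has_field_derivative U2 w) (at w)" by simp
    then show "(deriv u has_field_derivative U2 w) (at w)"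
      by (rule has_field_derivative_transform_within_open[OF _ oB' w]) (metis d1 DERIV_imp_deriv)
  qed
  have key: "\<And>w. w \<in> B' \<Longrightarrow> w*((w-c)^2*(g w * deriv (deriv g) w - (deriv g w)^2) + M*(g w)^2)
     = -(deriv g w*(w-c) - M*g w)*g w*(w-c) - 8*(g w)^3*q w*(w-c)^2 + 2*a*b*g w*(w-c)^2/q w + b^2*w*(w-c)^2/(q w)^2"
  proof -
    fix w assume w: "w \<in> B'"
    have wc: "w - c \<noteq> 0" using w by (auto simp: B'_def)
    have qnz: "q w \<noteq> 0" using wc by (simp add: q_def)
    have w0: "w \<noteq> 0" using w B'sub S_zero by auto
    have unz: "u w \<noteq> 0" using uB[OF w] gnz[OF w] qnz by simp
    have E: "deriv (deriv u) w = (deriv u w)\<^sup>2 / u w - deriv u w / w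
         + (- 8 * (u w)\<^sup>2 + 2 * a * b) / w + b\<^sup>2 / u w"
      using ode[OF _ unz] w B'sub by blast
    have "deriv u w = U1 w" using d1[OF w] by (rule DERIV_imp_deriv)
    moreover have "deriv (deriv u) w = U2 w" using d2[OF w] by (rule DERIV_imp_deriv)
    ultimately have E2: "U2 w = (U1 w)\<^sup>2 / (g w * q w) - U1 w / w
         + (- 8 * (g w * q w)\<^sup>2 + 2 * a * b) / w + b\<^sup>2 / (g w * q w)"
      using E uB[OF w] by simp
    show "?thesis w"
      by (rule alg1[OF gnz[OF w] qnz wc w0]) (use E2 in \<open>simp add: U1_def U2_def\<close>)
  qed
  have cB: "c \<in> B" using r1 by (simp add: B_def)
  have cg: "isCont g c" using gB oB cB
    by (meson continuous_on_eq_continuous_at holomorphic_on_imp_continuous_on)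
  have cg1: "isCont (deriv g) c" using g1B oB cB
    by (meson continuous_on_eq_continuous_at holomorphic_on_imp_continuous_on)
  have cg2: "isCont (deriv (deriv g)) c" using g2B oB cB
    by (meson continuous_on_eq_continuous_at holomorphic_on_imp_continuous_on)
  have wcB: "\<And>w. w \<in> B' \<Longrightarrow> w - c \<noteq> 0" by (auto simp: B'_def)
  have B'ball: "B' = ball c r1 - {c}" by (simp add: B'_def)
  have m2: "m = 2 \<and> g c = - c / 4"
  proof (cases "m = 1")
    case True
    define F1 where "F1 = (\<lambda>w. w*((w-c)^2*(g w * deriv (deriv g) w - (deriv g w)^2) + M*(g w)^2))"
    define H1 where "H1 = (\<lambda>w. -(deriv g w*(w-c) - M*g w)*g w*(w-c) - 8*(g w)^3*(w-c) + 2*a*b*g w*(w-c)^3 + b^2*w*(w-c)^4)"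
    have A: "\<And>w. w\<in>ball c r1 - {c} \<Longrightarrow> F1 w = H1 w"
    proof -
      fix w assume w: "w \<in> ball c r1 - {c}"
      then have w': "w \<in> B'" by (simp add: B'_def)
      have qw: "q w = 1/(w-c)^1" using True by (simp add: q_def)
      show "F1 w = H1 w" unfolding F1_def H1_def using alg_m1[OF wcB[OF w'] key[OF w', unfolded qw]] .
    qed
    have "isCont F1 c" unfolding F1_def by (intro continuous_intros cg cg1 cg2)
    moreover have "isCont H1 c" unfolding H1_def by (intro continuous_intros cg cg1 cg2)
    ultimately have "F1 c = H1 c" by (rule lim_eq[where F=F1 and H=H1 and c=c and r=r1, OF _ _ r1(1) A])
    then have "c * (g c)^2 = 0" using True by (simp add: M_def F1_def H1_def)
    then show ?thesis using c0 gc by simp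
  next
    case False
    define k where "k = m - 2"
    have mk: "m = k + 2" using False m1 by (simp add: k_def)
    define F1 where "F1 = (\<lambda>w. w*(w-c)^k*((w-c)^2*(g w * deriv (deriv g) w - (deriv g w)^2) + M*(g w)^2))"
    define H1 where "H1 = (\<lambda>w. -(deriv g w*(w-c) - M*g w)*g w*(w-c)^k*(w-c) - 8*(g w)^3 + 2*a*b*g w*((w-c)^k)^2*(w-c)^4 + b^2*w*((w-c)^k)^3*(w-c)^6)"
    have A: "\<And>w. w\<in>ball c r1 - {c} \<Longrightarrow> F1 w = H1 w"
    proof -
      fix w assume w: "w \<in> ball c r1 - {c}"
      then have w': "w \<in> B'" by (simp add: B'_def)
      have pnz: "(w-c)^k \<noteq> 0" using wcB[OF w'] by simp
      have qw: "q w = 1/((w-c)^k*(w-c)^2)" by (simp add: q_def mk power_add power2_eq_square)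
      show "F1 w = H1 w" unfolding F1_def H1_def using alg_m2[OF wcB[OF w'] pnz key[OF w', unfolded qw]] .
    qed
    have "isCont F1 c" unfolding F1_def by (intro continuous_intros cg cg1 cg2)
    moreover have "isCont H1 c" unfolding H1_def by (intro continuous_intros cg cg1 cg2)
    ultimately have E: "F1 c = H1 c" by (rule lim_eq[where F=F1 and H=H1 and c=c and r=r1, OF _ _ r1(1) A])
    show ?thesis
    proof (cases "k = 0")
      case True
      have M2: "M = 2" using mk True by (simp add: M_def)
      have Fc: "F1 c = c * (M * (g c)^2)" using True by (simp add: F1_def)
      have Hc: "H1 c = - 8 * (g c)^3" by (simp add: H1_def)
      have "c * (M * (g c)^2) = - 8 * (g c)^3" using E unfolding Fc Hc .
      then have "c * (2 * (g c)^2) = - 8 * (g c)^3" unfolding M2 .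
      then have "g c = - c / 4" by (rule alg_gc[OF gc])
      then show ?thesis using mk True by simp
    next
      case False
      have "F1 c = 0" using False by (simp add: F1_def)
      moreover have "H1 c = - 8 * (g c)^3" by (simp add: H1_def)
      ultimately have "(g c)^3 = 0" using E by simp
      then show ?thesis using gc by simp
    qed
  qed
  have gcv: "g c = - c / 4" and mtwo: "m = 2" using m2 by auto
  have "Re (g c) < 0" using gcv t0 by (simp add: c_def)
  have cRe: "isCont (\<lambda>x::real. Re (g (complex_of_real x))) t0"
  proof -
    have ofc: "isCont (\<lambda>x::real. complex_of_real x) t0" by (intro continuous_intros)
    have h1: "isCont (\<lambda>x. g (complex_of_real x)) t0" using isCont_o2[OF ofc, of g] cg by (simp add: c_def)
    show ?thesis using continuous_Re[OF h1] .
  qed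
  then have "((\<lambda>x::real. Re (g (complex_of_real x))) \<longlongrightarrow> Re (g c)) (at t0)"
    by (simp add: isCont_def c_def)
  then have "eventually (\<lambda>x. Re (g (complex_of_real x)) < 0) (at t0)"
    using \<open>Re (g c) < 0\<close> by (rule order_tendstoD(2))
  then obtain d where d: "d > 0" "\<And>x. x \<noteq> t0 \<Longrightarrow> dist x t0 < d \<Longrightarrow> Re (g (complex_of_real x)) < 0"
    unfolding eventually_at by auto
  define s where "s = t0 + min d (min r1 t0) / 2"
  have s1: "s \<noteq> t0" "dist s t0 < d" "s > 0" "\<bar>s - t0\<bar> < r1"
    using d r1(1) t0 by (auto simp: s_def dist_real_def)
  have Rg: "Re (g (complex_of_real s)) < 0" using d(2) s1 by blast
  have sB: "complex_of_real s \<in> B'"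
    using s1 by (auto simp: B'_def c_def dist_norm simp flip: of_real_diff)
  have "\<not> is_pole u (complex_of_real s)"
  proof (rule not_is_pole_holomorphic[OF oB' sB])
    show "u holomorphic_on B'" using holomorphic_on_subset[OF holo B'sub] .
  qed
  then have pos: "Re (u (complex_of_real s)) > 0" using re_pos s1(3) by blast
  have "u (complex_of_real s) = g (complex_of_real s) / complex_of_real ((s - t0)^2)"
    using uB[OF sB] mtwo by (simp add: q_def c_def)
  then have ReU: "Re (u (complex_of_real s)) = Re (g (complex_of_real s)) / (s - t0)^2"
    by (simp add: Re_divide_of_real)
  have sq: "(s - t0)^2 > 0" using s1(1) by simp
  have "Re (g (complex_of_real s)) / (s - t0)^2 < 0" by (rule divide_neg_pos[OF Rg sq])
  then show False using pos unfolding ReU by linarith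
qed

end
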